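(* Assume ideal Weyl gates. Let $\mathcal{M}$ be a noisy $n$-qudit instrument with generalized Pauli fidelities $\tilde\nu_{s,t}$. Let $\vec k=(k_1,\dots,k_m)$ be the output of the instrument benchmarking routine with sequence length $m$ and initial state $\rho$. Let $c_1,\dots,c_m\in\mathbb{Z}_d^n$ and set $c_{m+1}=0$. Then the expectation value of $$\prod_{j=1}^m\chi_{k_j}(c_j-c_{j+1})^*$$ equals $$\kappa(\vec c)=\operatorname{tr}\big(Z^{-c_1}\rho\big)\prod_{j=1}^m\tilde\nu_{c_j,c_{j+1}}.$$
   Context: Let $d,n$ be positive integers, with arithmetic on $\mathbb{Z}_d^n$ modulo $d$. Let $\chi_z(j)=e^{2\pi i z\cdot j/d}$, $X^x=\sum_j|j+x\rangle\langle j|$, and $Z^z=\sum_j\chi_z(j)|j\rangle\langle j|$ (so $Z^{-c}$ denotes $Z^{(-c)}$). For an operator $A$, $\mathcal{A}(\rho)=A\rho A^\dagger$. An instrument $\{\mathcal{M}_o\}_{o\in\mathbb{Z}_d^n}$ is a family of completely positive trace-non-increasing maps summing to a trace-preserving map. Its generalized Pauli fidelities are $$\tilde\nu_{s,t}=d^{-n}\sum_k\chi_k(s-t)^*\operatorname{tr}\big((Z^t)^\dagger\mathcal{M}_k(Z^s)\big).$$ The instrument benchmarking routine with sequence length $m$ proceeds as follows: - Prepare $\rho$ and set $\alpha_0=0$. - For $i=1,\dots,m$: choose $\alpha_i,\beta_i\in\mathbb{Z}_d^n$ uniformly at random; apply the ideal gate $Z^{\beta_i}X^{\alpha_{i-1}-\alpha_i}$;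 measure with the noisy instrument (outcome $o$ occurs with probability $\operatorname{tr}\mathcal{M}_o(\sigma)$ and leaves the state $\mathcal{M}_o(\sigma)/\operatorname{tr}\mathcal{M}_o(\sigma)$), obtaining $o_i$; record $k_i=\alpha_i+o_i$. - Return $\vec k=(k_1,\dots,k_m)$. *)

theory Defs
  imports Complex_Main
begin

text \<open>Elements of Z_d^n are represented as functions nat => nat that are
  below d on the coordinates 0..n-1 and zero elsewhere.  Operators on the
  Hilbert space spanned by the basis |j>, j in Z_d^n, are represented by their
  matrix entries A j k = <j|A|k>; only entries with j,k in the carrier matter.\<close>

type_synonym zvec = "nat \<Rightarrow> nat"
type_synonym qop = "zvec \<Rightarrow> zvec \<Rightarrow> complex"

definition Zdn :: "nat \<Rightarrow> nat \<Rightarrow> zvec set" where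
  "Zdn d n = {x. (\<forall>i<n. x i < d) \<and> (\<forall>i\<ge>n. x i = 0)}"

definition zero_v :: zvec where "zero_v = (\<lambda>_. 0)"

definition addv :: "nat \<Rightarrow> nat \<Rightarrow> zvec \<Rightarrow> zvec \<Rightarrow> zvec" where
  "addv d n x y = (\<lambda>i. if i < n then (x i + y i) mod d else 0)"

definition negv :: "nat \<Rightarrow> nat \<Rightarrow> zvec \<Rightarrow> zvec" where
  "negv d n x = (\<lambda>i. if i < n then (d - x i mod d) mod d else 0)"

definition subv :: "nat \<Rightarrow> nat \<Rightarrow> zvec \<Rightarrow> zvec \<Rightarrow> zvec" where
  "subv d n x y = addv d n x (negv d n y)"

definition chi :: "nat \<Rightarrow> nat \<Rightarrow> zvec \<Rightarrow> zvec \<Rightarrow> complex" where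
  "chi d n z j = cis (2 * pi * real (\<Sum>i<n. z i * j i) / real d)"

definition Xop :: "nat \<Rightarrow> nat \<Rightarrow> zvec \<Rightarrow> qop" where
  "Xop d n x = (\<lambda>j k. if j \<in> Zdn d n \<and> k \<in> Zdn d n \<and> j = addv d n k x then 1 else 0)"

definition Zop :: "nat \<Rightarrow> nat \<Rightarrow> zvec \<Rightarrow> qop" where
  "Zop d n z = (\<lambda>j k. if j \<in> Zdn d n \<and> j = k then chi d n z j else 0)"

definition mmult :: "nat \<Rightarrow> nat \<Rightarrow> qop \<Rightarrow> qop \<Rightarrow> qop" where
  "mmult d n A B = (\<lambda>j k. \<Sum>l\<in>Zdn d n. A j l * B l k)"

definition adj :: "qop \<Rightarrow> qop" where
  "adj A = (\<lambda>j k. cnj (A k j))"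

definition qtr :: "nat \<Rightarrow> nat \<Rightarrow> qop \<Rightarrow> complex" where
  "qtr d n A = (\<Sum>j\<in>Zdn d n. A j j)"

definition conj_by :: "nat \<Rightarrow> nat \<Rightarrow> qop \<Rightarrow> qop \<Rightarrow> qop" where
  "conj_by d n A \<rho> = mmult d n A (mmult d n \<rho> (adj A))"

definition psd :: "'i set \<Rightarrow> ('i \<Rightarrow> 'i \<Rightarrow> complex) \<Rightarrow> bool" where
  "psd I A = (\<forall>v. (\<Sum>i\<in>I. \<Sum>j\<in>I. cnj (v i) * A i j * v j) \<in> \<real> \<and>
                  Re (\<Sum>i\<in>I. \<Sum>j\<in>I. cnj (v i) * A i j * v j) \<ge> 0)"

definition density :: "nat \<Rightarrow> nat \<Rightarrow> qop \<Rightarrow> bool" where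
  "density d n \<rho> = (psd (Zdn d n) \<rho> \<and> qtr d n \<rho> = 1)"

definition superop :: "nat \<Rightarrow> nat \<Rightarrow> (qop \<Rightarrow> qop) \<Rightarrow> bool" where
  "superop d n \<Phi> =
     ((\<forall>A B. \<Phi> (\<lambda>j k. A j k + B j k) = (\<lambda>j k. \<Phi> A j k + \<Phi> B j k)) \<and>
      (\<forall>c A. \<Phi> (\<lambda>j k. c * A j k) = (\<lambda>j k. c * \<Phi> A j k)) \<and>
      (\<forall>A B. (\<forall>j\<in>Zdn d n. \<forall>k\<in>Zdn d n. A j k = B j k) \<longrightarrow>
             (\<forall>j\<in>Zdn d n. \<forall>k\<in>Zdn d n. \<Phi> A j k = \<Phi> B j k)))"

text \<open>id_k (tensor) Phi acting on operators on C^k (tensor) H\<close>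
definition ampl :: "(qop \<Rightarrow> qop) \<Rightarrow> ((nat \<times> zvec) \<Rightarrow> (nat \<times> zvec) \<Rightarrow> complex)
                    \<Rightarrow> ((nat \<times> zvec) \<Rightarrow> (nat \<times> zvec) \<Rightarrow> complex)" where
  "ampl \<Phi> X = (\<lambda>(a, j) (b, l). \<Phi> (\<lambda>j' l'. X (a, j') (b, l')) j l)"

definition completely_positive :: "nat \<Rightarrow> nat \<Rightarrow> (qop \<Rightarrow> qop) \<Rightarrow> bool" where
  "completely_positive d n \<Phi> =
     (superop d n \<Phi> \<and>
      (\<forall>k::nat. \<forall>X. psd ({..<k} \<times> Zdn d n) X \<longrightarrow> psd ({..<k} \<times> Zdn d n) (ampl \<Phi> X)))"

definition trace_nonincreasing :: "nat \<Rightarrow> nat \<Rightarrow> (qop \<Rightarrow> qop) \<Rightarrow> bool" where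
  "trace_nonincreasing d n \<Phi> =
     (\<forall>A. psd (Zdn d n) A \<longrightarrow> Re (qtr d n (\<Phi> A)) \<le> Re (qtr d n A))"

definition instrument :: "nat \<Rightarrow> nat \<Rightarrow> (zvec \<Rightarrow> qop \<Rightarrow> qop) \<Rightarrow> bool" where
  "instrument d n M =
     ((\<forall>u\<in>Zdn d n. completely_positive d n (M u) \<and> trace_nonincreasing d n (M u)) \<and>
      (\<forall>A. qtr d n (\<lambda>j k. \<Sum>u\<in>Zdn d n. M u A j k) = qtr d n A))"

definition gpf :: "nat \<Rightarrow> nat \<Rightarrow> (zvec \<Rightarrow> qop \<Rightarrow> qop) \<Rightarrow> zvec \<Rightarrow> zvec \<Rightarrow> complex" where
  "gpf d n M s t = (1 / of_nat (d ^ n)) *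
     (\<Sum>k\<in>Zdn d n. cnj (chi d n k (subv d n s t)) *
        qtr d n (mmult d n (adj (Zop d n t)) (M k (Zop d n s))))"

text \<open>Expectation of prod_j w_j(k_j) over the instrument benchmarking routine.
  Arguments: list of weight functions w_j (one per round), previous alpha, current
  (normalized) state.  Each round: alpha, beta uniform on Z_d^n; apply the gate
  Z^beta X^(alpha_prev - alpha); measure; outcome o with probability tr M_o(sigma),
  post-measurement state M_o(sigma)/tr M_o(sigma); record k = alpha + o.\<close>
fun bench_exp :: "nat \<Rightarrow> nat \<Rightarrow> (zvec \<Rightarrow> qop \<Rightarrow> qop) \<Rightarrow> (zvec \<Rightarrow> complex) list
                  \<Rightarrow> zvec \<Rightarrow> qop \<Rightarrow> complex" where
  "bench_exp d n M [] a \<sigma> = 1"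
| "bench_exp d n M (w # ws) a \<sigma> =
     (\<Sum>\<alpha>\<in>Zdn d n. \<Sum>\<beta>\<in>Zdn d n. \<Sum>u\<in>Zdn d n.
        (let G = mmult d n (Zop d n \<beta>) (Xop d n (subv d n a \<alpha>));
             \<tau> = M u (conj_by d n G \<sigma>);
             p = qtr d n \<tau>
         in if p = 0 then 0
            else (1 / of_nat (d ^ n)) * (1 / of_nat (d ^ n)) * p * w (addv d n \<alpha> u) *
                 bench_exp d n M ws \<alpha> (\<lambda>j k. \<tau> j k / p)))"

end

theory Submission
  imports Defs "HOL-Library.FuncSet"
begin

definition ef :: "nat \<Rightarrow> nat \<Rightarrow> complex" where
  "ef d N = cis (2 * pi * real N / real d)"

lemma chi_ef: "chi d n z j = ef d (\<Sum>i<n. z i * j i)"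
  unfolding chi_def ef_def by simp

lemma ef_add: "ef d (a + b) = ef d a * ef d b"
  unfolding ef_def by (simp add: cis_mult add_divide_distrib distrib_left)

lemma ef_mod: assumes "d > 0" shows "ef d (a mod d) = ef d a"
proof -
  have "a = a mod d + d * (a div d)" by simp
  then have "ef d a = ef d (a mod d) * ef d (d * (a div d))" by (metis ef_add)
  moreover have "ef d (d * (a div d)) = 1"
  proof -
    have "cis (2*pi*real (a div d)) = 1" by (rule cis_multiple_2pi) simp
    moreover have "2 * pi * real (d * (a div d)) / real d = 2*pi*real (a div d)" using assms by simp
    ultimately show ?thesis unfolding ef_def by simp
  qed
  ultimately show ?thesis by simp
qed

lemma ef_norm[simp]: "norm (ef d a) = 1" unfolding ef_def by simp

lemma ef_inj: assumes "d > 0" "a < d" "b < d" "ef d a = ef d b" shows "a = b"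
proof -
  have "inj_on (\<lambda>k. cis (2 * pi * real k / real d)) {..<d}"
    using bij_betw_roots_unity[OF assms(1)] by (simp add: bij_betw_def)
  then show ?thesis using assms(2-4) unfolding ef_def inj_on_def by blast
qed

lemma chi_congr:
  assumes "d > 0" "\<forall>i<n. x i mod d = x' i mod d"
  shows "chi d n z x = chi d n z x'"
proof -
  have "(\<Sum>i<n. z i * x i) mod d = (\<Sum>i<n. z i * x i mod d) mod d" by (simp add: mod_sum_eq)
  also have "\<dots> = (\<Sum>i<n. z i * x' i mod d) mod d"
  proof (rule arg_cong[where f="\<lambda>t. t mod d"], rule sum.cong[OF refl])
    fix i assume "i \<in> {..<n}"
    then have "x i mod d = x' i mod d" using assms(2) by simp
    then show "z i * x i mod d = z i * x' i mod d" by (metis mod_mult_right_eq)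
  qed
  also have "\<dots> = (\<Sum>i<n. z i * x' i) mod d" by (simp add: mod_sum_eq)
  finally show ?thesis unfolding chi_ef using ef_mod[OF assms(1)] by metis
qed

lemma chi_sym: "chi d n z x = chi d n x z"
  unfolding chi_def by (simp add: mult.commute)

lemma chi_plus: "chi d n z (\<lambda>i. x i + y i) = chi d n z x * chi d n z y"
  unfolding chi_ef by (simp add: distrib_left sum.distrib ef_add)

lemma chi_norm[simp]: "norm (chi d n z x) = 1" unfolding chi_ef by simp

lemma chi_cnj_mult[simp]: "chi d n z x * cnj (chi d n z x) = 1"
  using complex_norm_square[of "chi d n z x", symmetric] by simp


lemma chi_cnj_mult'[simp]: "cnj (chi d n z x) * chi d n z x = 1"
  using chi_cnj_mult[of d n z x] by (simp add: mult.commute)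

lemma zero_Zdn[simp]: "d > 0 \<Longrightarrow> zero_v \<in> Zdn d n" unfolding Zdn_def zero_v_def by auto

lemma addv_Zdn[simp]: "d > 0 \<Longrightarrow> addv d n x y \<in> Zdn d n" unfolding Zdn_def addv_def by auto
lemma negv_Zdn[simp]: "d > 0 \<Longrightarrow> negv d n x \<in> Zdn d n" unfolding Zdn_def negv_def by auto
lemma subv_Zdn[simp]: "d > 0 \<Longrightarrow> subv d n x y \<in> Zdn d n" unfolding subv_def by simp

lemma Zdn_bij: "bij_betw (\<lambda>x. restrict x {..<n}) (Zdn d n) (PiE {..<n} (\<lambda>_. {..<d}))"
proof (rule bij_betw_imageI)
  show "inj_on (\<lambda>x. restrict x {..<n}) (Zdn d n)"
  proof (rule inj_onI)
    fix x y assume xy: "x \<in> Zdn d n" "y \<in> Zdn d n" "restrict x {..<n} = restrict y {..<n}"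
    show "x = y"
    proof
      fix i show "x i = y i"
      proof (cases "i < n")
        case True
        have "restrict x {..<n} i = restrict y {..<n} i" using xy(3) by simp
        then show ?thesis using True by simp
      next
        case False then show ?thesis using xy(1,2) unfolding Zdn_def by simp
      qed
    qed
  qed
  show "(\<lambda>x. restrict x {..<n}) ` Zdn d n = PiE {..<n} (\<lambda>_. {..<d})"
  proof
    show "(\<lambda>x. restrict x {..<n}) ` Zdn d n \<subseteq> PiE {..<n} (\<lambda>_. {..<d})"
    proof
      fix f assume "f \<in> (\<lambda>x. restrict x {..<n}) ` Zdn d n"
      then obtain x where x: "x \<in> Zdn d n" "f = restrict x {..<n}" by blast
      show "f \<in> PiE {..<n} (\<lambda>_. {..<d})" unfolding x(2) PiE_iff
        using x(1) unfolding Zdn_def by simp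
    qed
    show "PiE {..<n} (\<lambda>_. {..<d}) \<subseteq> (\<lambda>x. restrict x {..<n}) ` Zdn d n"
    proof
      fix f assume f: "f \<in> PiE {..<n} (\<lambda>_. {..<d})"
      let ?g = "\<lambda>i. if i < n then f i else 0"
      have "?g \<in> Zdn d n" using f unfolding Zdn_def PiE_iff by simp
      moreover have "restrict ?g {..<n} = f"
      proof
        fix i show "restrict ?g {..<n} i = f i"
          using PiE_arb[OF f, of i] by (cases "i < n") simp_all
      qed
      ultimately show "f \<in> (\<lambda>x. restrict x {..<n}) ` Zdn d n" by (metis (no_types, lifting) image_eqI)
    qed
  qed
qed

lemma finite_Zdn[simp]: "finite (Zdn d n)"
  using bij_betw_finite[OF Zdn_bij] by (simp add: finite_PiE)

lemma card_Zdn: "card (Zdn d n) = d ^ n"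
  using bij_betw_same_card[OF Zdn_bij] by (simp add: card_PiE)

lemma addv_subv:
  assumes "d > 0" "x \<in> Zdn d n" "v \<in> Zdn d n"
  shows "addv d n (subv d n x v) v = x"
proof
  fix i show "addv d n (subv d n x v) v i = x i"
  proof (cases "i < n")
    case True
    then have xi: "x i < d" and vi: "v i < d" using assms unfolding Zdn_def by auto
    show ?thesis
    proof (cases "v i = 0")
      case True then show ?thesis using \<open>i<n\<close> xi unfolding addv_def subv_def negv_def by simp
    next
      case False
      then have "(d - v i mod d) mod d = d - v i" using vi by simp
      then have "addv d n (subv d n x v) v i = ((x i + (d - v i)) mod d + v i) mod d"
        using \<open>i<n\<close> unfolding addv_def subv_def negv_def by simp
      also have "\<dots> = (x i + (d - v i) + v i) mod d" by (simp add: mod_add_left_eq)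
      also have "\<dots> = (x i + d) mod d" using vi by simp
      also have "\<dots> = x i" using xi by simp
      finally show ?thesis .
    qed
  next
    case False then show ?thesis using assms unfolding addv_def Zdn_def by auto
  qed
qed

lemma subv_addv:
  assumes "d > 0" "x \<in> Zdn d n" "v \<in> Zdn d n"
  shows "subv d n (addv d n x v) v = x"
proof
  fix i show "subv d n (addv d n x v) v i = x i"
  proof (cases "i < n")
    case True
    then have xi: "x i < d" and vi: "v i < d" using assms unfolding Zdn_def by auto
    show ?thesis
    proof (cases "v i = 0")
      case True then show ?thesis using \<open>i<n\<close> xi unfolding addv_def subv_def negv_def by simp
    next
      case False
      then have "(d - v i mod d) mod d = d - v i" using vi by simp
      then have "subv d n (addv d n x v) v i = ((x i + v i) mod d + (d - v i)) mod d"
        using \<open>i<n\<close> unfolding addv_def subv_def negv_def by simp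
      also have "\<dots> = (x i + v i + (d - v i)) mod d" by (simp add: mod_add_left_eq)
      also have "\<dots> = (x i + d) mod d" using vi by simp
      also have "\<dots> = x i" using xi by simp
      finally show ?thesis .
    qed
  next
    case False then show ?thesis using assms unfolding subv_def addv_def Zdn_def by auto
  qed
qed

lemma addv_eq_iff:
  assumes "d > 0" "x \<in> Zdn d n" "l \<in> Zdn d n" "v \<in> Zdn d n"
  shows "(x = addv d n l v) = (l = subv d n x v)"
proof
  assume "x = addv d n l v" then show "l = subv d n x v" using subv_addv[OF assms(1,3,4)] by simp
next
  assume "l = subv d n x v" then show "x = addv d n l v" using addv_subv[OF assms(1,2,4)] by simp
qed

lemma shift_bij:
  assumes "d > 0" "v \<in> Zdn d n"
  shows "bij_betw (\<lambda>x. addv d n x v) (Zdn d n) (Zdn d n)"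
proof (rule bij_betwI[where g="\<lambda>x. subv d n x v"])
  show "(\<lambda>x. addv d n x v) \<in> Zdn d n \<rightarrow> Zdn d n" using assms by simp
  show "(\<lambda>x. subv d n x v) \<in> Zdn d n \<rightarrow> Zdn d n" using assms by simp
  show "\<And>x. x \<in> Zdn d n \<Longrightarrow> subv d n (addv d n x v) v = x" using assms subv_addv by blast
  show "\<And>x. x \<in> Zdn d n \<Longrightarrow> addv d n (subv d n x v) v = x" using assms addv_subv by blast
qed

lemma chi_zero[simp]: "chi d n z zero_v = 1" unfolding chi_def zero_v_def by simp

lemma chi_addv: assumes "d > 0" shows "chi d n z (addv d n x y) = chi d n z x * chi d n z y"
proof -
  have "chi d n z (addv d n x y) = chi d n z (\<lambda>i. x i + y i)"
    using assms by (intro chi_congr) (auto simp: addv_def)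
  then show ?thesis by (simp add: chi_plus)
qed

lemma chi_negv: assumes "d > 0" shows "chi d n z (negv d n x) = cnj (chi d n z x)"
proof -
  have "chi d n z (negv d n x) * chi d n z x = chi d n z (\<lambda>i. negv d n x i + x i)"
    by (simp add: chi_plus)
  also have "\<dots> = chi d n z zero_v"
  proof (rule chi_congr[OF assms], intro allI impI)
    fix i assume "i < n"
    have "x i mod d < d" using assms by simp
    then have "(d - x i mod d + x i mod d) mod d = 0" by simp
    moreover have "((d - x i mod d) mod d + x i) mod d = (d - x i mod d + x i mod d) mod d"
      by (simp only: mod_add_left_eq mod_add_right_eq)
    ultimately have "((d - x i mod d) mod d + x i) mod d = 0" by simp
    then show "(negv d n x i + x i) mod d = zero_v i mod d"
      using \<open>i<n\<close> unfolding negv_def zero_v_def by simp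
  qed
  finally have "chi d n z (negv d n x) * chi d n z x = 1" by simp
  then have "chi d n z (negv d n x) * chi d n z x * cnj (chi d n z x) = cnj (chi d n z x)" by simp
  then show ?thesis by (simp add: mult.assoc)
qed

lemma chi_subv: assumes "d > 0"
  shows "chi d n z (subv d n x y) = chi d n z x * cnj (chi d n z y)"
  unfolding subv_def using assms by (simp add: chi_addv chi_negv)

lemma ef_cnj_mult: "cnj (ef d a) * ef d a = 1"
  using complex_norm_square[of "ef d a", symmetric] by (simp add: mult.commute)

lemma ortho:
  assumes d: "d > 0" and x: "x \<in> Zdn d n" and y: "y \<in> Zdn d n"
  shows "(\<Sum>\<beta>\<in>Zdn d n. chi d n \<beta> x * cnj (chi d n \<beta> y)) = (if x = y then of_nat (d ^ n) else 0)"
proof (cases "x = y")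
  case True
  then show ?thesis by (simp add: card_Zdn)
next
  case False
  obtain i where i: "i < n" "x i \<noteq> y i"
  proof -
    have "\<exists>i<n. x i \<noteq> y i"
    proof (rule ccontr)
      assume "\<not> (\<exists>i<n. x i \<noteq> y i)"
      have "x = y"
      proof
        fix k show "x k = y k" using x y \<open>\<not> (\<exists>i<n. x i \<noteq> y i)\<close> unfolding Zdn_def by (cases "k < n") auto
      qed
      then show False using False by simp
    qed
    then show ?thesis using that by blast
  qed
  have xi: "x i < d" and yi: "y i < d" using x y i(1) unfolding Zdn_def by auto
  then have d2: "1 < d" using i(2) by linarith
  define b where "b = (\<lambda>k. if k = i then 1 else (0::nat))"
  have b: "b \<in> Zdn d n" using d2 i(1) unfolding Zdn_def b_def by auto
  have chib: "chi d n z b = ef d (z i)" for z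
  proof -
    have "(\<Sum>k<n. z k * b k) = (\<Sum>k<n. if k = i then z k else 0)"
      unfolding b_def by (intro sum.cong) auto
    also have "\<dots> = z i" using i(1) by simp
    finally show ?thesis unfolding chi_ef by simp
  qed
  define f where "f = (\<lambda>\<beta>. chi d n \<beta> x * cnj (chi d n \<beta> y))"
  define q where "q = chi d n x b * cnj (chi d n y b)"
  have fshift: "f (addv d n \<beta> b) = f \<beta> * q" for \<beta>
  proof -
    have e: "chi d n (addv d n \<beta> b) z = chi d n \<beta> z * chi d n z b" for z
      using chi_sym[of d n "addv d n \<beta> b" z] chi_addv[OF d, of n z \<beta> b] chi_sym[of d n z \<beta>] by simp
    show ?thesis unfolding f_def q_def e by (simp add: mult_ac)
  qed
  have "sum f (Zdn d n) = sum (\<lambda>\<beta>. f (addv d n \<beta> b)) (Zdn d n)"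
    using sum.reindex_bij_betw[OF shift_bij[OF d b], of f] by simp
  also have "\<dots> = sum f (Zdn d n) * q" by (simp add: fshift sum_distrib_right)
  finally have S: "sum f (Zdn d n) * (1 - q) = 0" by (simp add: algebra_simps)
  have "q \<noteq> 1"
  proof
    assume "q = 1"
    then have "ef d (x i) * cnj (ef d (y i)) * ef d (y i) = ef d (y i)" unfolding q_def chib by simp
    then have "ef d (x i) = ef d (y i)" using ef_cnj_mult[of d "y i"] by (simp add: mult.assoc)
    then show False using ef_inj[OF d xi yi] i(2) by simp
  qed
  then have "sum f (Zdn d n) = 0" using S by simp
  then show ?thesis using False unfolding f_def by simp
qed

lemma superop_zero:
  assumes "superop d n \<Phi>" shows "\<Phi> (\<lambda>j k. 0) = (\<lambda>j k. 0)"
proof -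
  have "\<Phi> (\<lambda>j k. 0 * A j k) = (\<lambda>j k. 0 * \<Phi> A j k)" for A
    using assms unfolding superop_def by blast
  then show ?thesis by simp
qed

lemma superop_sum:
  assumes "superop d n \<Phi>" and "finite S"
  shows "\<Phi> (\<lambda>j k. \<Sum>x\<in>S. f x j k) = (\<lambda>j k. \<Sum>x\<in>S. \<Phi> (f x) j k)"
  using assms(2)
proof (induction S rule: finite_induct)
  case empty then show ?case using superop_zero[OF assms(1)] by simp
next
  case (insert a S)
  have add: "\<Phi> (\<lambda>j k. A j k + B j k) = (\<lambda>j k. \<Phi> A j k + \<Phi> B j k)" for A B
    using assms(1) unfolding superop_def by blast
  have "\<Phi> (\<lambda>j k. \<Sum>x\<in>insert a S. f x j k) = \<Phi> (\<lambda>j k. f a j k + (\<Sum>x\<in>S. f x j k))"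
    using insert by simp
  also have "\<dots> = (\<lambda>j k. \<Phi> (f a) j k + \<Phi> (\<lambda>j k. \<Sum>x\<in>S. f x j k) j k)"
    using add[of "f a" "\<lambda>j k. \<Sum>x\<in>S. f x j k"] by simp
  also have "\<dots> = (\<lambda>j k. \<Sum>x\<in>insert a S. \<Phi> (f x) j k)" using insert by simp
  finally show ?case .
qed

lemma superop_lin:
  assumes "superop d n \<Phi>" and "finite S"
  shows "\<Phi> (\<lambda>j k. \<Sum>x\<in>S. c x * f x j k) = (\<lambda>j k. \<Sum>x\<in>S. c x * \<Phi> (f x) j k)"
proof -
  have sc: "\<Phi> (\<lambda>j k. c * A j k) = (\<lambda>j k. c * \<Phi> A j k)" for c A
    using assms(1) unfolding superop_def by blast
  have "\<Phi> (\<lambda>j k. \<Sum>x\<in>S. c x * f x j k) = (\<lambda>j k. \<Sum>x\<in>S. \<Phi> (\<lambda>j k. c x * f x j k) j k)"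
    using superop_sum[OF assms, of "\<lambda>x j k. c x * f x j k"] by simp
  also have "\<dots> = (\<lambda>j k. \<Sum>x\<in>S. c x * \<Phi> (f x) j k)" by (simp add: sc)
  finally show ?thesis .
qed

lemma superop_local:
  assumes "superop d n \<Phi>" "\<forall>j\<in>Zdn d n. \<forall>k\<in>Zdn d n. A j k = B j k"
    "j \<in> Zdn d n" "k \<in> Zdn d n"
  shows "\<Phi> A j k = \<Phi> B j k"
  using assms unfolding superop_def by blast

lemma G_entry:
  assumes d: "d > 0" and x: "x \<in> Zdn d n" and l: "l \<in> Zdn d n" and v: "v \<in> Zdn d n"
  shows "mmult d n (Zop d n \<beta>) (Xop d n v) x l = (if l = subv d n x v then chi d n \<beta> x else 0)"
proof -
  have "mmult d n (Zop d n \<beta>) (Xop d n v) x l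
      = (\<Sum>t\<in>Zdn d n. if t = x then chi d n \<beta> x * Xop d n v x l else 0)"
    unfolding mmult_def Zop_def using x by (intro sum.cong) auto
  also have "\<dots> = chi d n \<beta> x * Xop d n v x l" using x by simp
  also have "\<dots> = (if l = subv d n x v then chi d n \<beta> x else 0)"
    unfolding Xop_def using addv_eq_iff[OF d x l v] x l by simp
  finally show ?thesis .
qed

lemma conj_entry:
  assumes d: "d > 0" and x: "x \<in> Zdn d n" and y: "y \<in> Zdn d n" and v: "v \<in> Zdn d n"
  shows "conj_by d n (mmult d n (Zop d n \<beta>) (Xop d n v)) \<sigma> x y
       = chi d n \<beta> x * cnj (chi d n \<beta> y) * \<sigma> (subv d n x v) (subv d n y v)"
proof -
  let ?G = "mmult d n (Zop d n \<beta>) (Xop d n v)"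
  have inner: "(\<Sum>l'\<in>Zdn d n. \<sigma> l l' * adj ?G l' y) = \<sigma> l (subv d n y v) * cnj (chi d n \<beta> y)" for l
  proof -
    have "(\<Sum>l'\<in>Zdn d n. \<sigma> l l' * adj ?G l' y)
        = (\<Sum>l'\<in>Zdn d n. if l' = subv d n y v then \<sigma> l l' * cnj (chi d n \<beta> y) else 0)"
      unfolding adj_def by (intro sum.cong refl) (simp add: G_entry[OF d y _ v])
    also have "\<dots> = \<sigma> l (subv d n y v) * cnj (chi d n \<beta> y)" using d by simp
    finally show ?thesis .
  qed
  have "conj_by d n ?G \<sigma> x y = (\<Sum>l\<in>Zdn d n. ?G x l * (\<sigma> l (subv d n y v) * cnj (chi d n \<beta> y)))"
    unfolding conj_by_def mmult_def[of d n ?G] mmult_def[of d n \<sigma>] using inner by simp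
  also have "\<dots> = (\<Sum>l\<in>Zdn d n. if l = subv d n x v then
                   chi d n \<beta> x * (\<sigma> l (subv d n y v) * cnj (chi d n \<beta> y)) else 0)"
    by (intro sum.cong refl) (simp add: G_entry[OF d x _ v])
  also have "\<dots> = chi d n \<beta> x * cnj (chi d n \<beta> y) * \<sigma> (subv d n x v) (subv d n y v)"
    using d by (simp add: mult_ac)
  finally show ?thesis .
qed

lemma twirl:
  assumes d: "d > 0" and x: "x \<in> Zdn d n" and y: "y \<in> Zdn d n" and v: "v \<in> Zdn d n"
  shows "(\<Sum>\<beta>\<in>Zdn d n. conj_by d n (mmult d n (Zop d n \<beta>) (Xop d n v)) \<sigma> x y)
       = (if x = y then of_nat (d ^ n) * \<sigma> (subv d n x v) (subv d n x v) else 0)"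
proof -
  have "(\<Sum>\<beta>\<in>Zdn d n. conj_by d n (mmult d n (Zop d n \<beta>) (Xop d n v)) \<sigma> x y)
      = (\<Sum>\<beta>\<in>Zdn d n. chi d n \<beta> x * cnj (chi d n \<beta> y)) * \<sigma> (subv d n x v) (subv d n y v)"
    by (simp add: conj_entry[OF d x y v] sum_distrib_right)
  then show ?thesis using ortho[OF d x y] by simp
qed

lemma diag_decomp:
  assumes d: "d > 0" and x: "x \<in> Zdn d n" and y: "y \<in> Zdn d n"
  shows "(if x = y then of_nat (d ^ n) * g x else 0)
       = (\<Sum>s\<in>Zdn d n. (\<Sum>z\<in>Zdn d n. g z * cnj (chi d n s z)) * Zop d n s x y)"
proof (cases "x = y")
  case False then show ?thesis unfolding Zop_def by simp
next
  case True
  have "(\<Sum>s\<in>Zdn d n. (\<Sum>z\<in>Zdn d n. g z * cnj (chi d n s z)) * Zop d n s x y)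
      = (\<Sum>s\<in>Zdn d n. \<Sum>z\<in>Zdn d n. g z * (chi d n s x * cnj (chi d n s z)))"
    unfolding Zop_def using True x by (intro sum.cong refl) (simp add: sum_distrib_left sum_distrib_right mult_ac)
  also have "\<dots> = (\<Sum>z\<in>Zdn d n. g z * (\<Sum>s\<in>Zdn d n. chi d n s x * cnj (chi d n s z)))"
    by (subst sum.swap) (simp add: sum_distrib_left)
  also have "\<dots> = (\<Sum>z\<in>Zdn d n. if z = x then g x * of_nat (d ^ n) else 0)"
    by (intro sum.cong refl) (auto simp: ortho[OF d x])
  also have "\<dots> = of_nat (d ^ n) * g x" using x by (simp add: mult.commute)
  finally show ?thesis using True by simp
qed

definition qf :: "'i set \<Rightarrow> ('i \<Rightarrow> 'i \<Rightarrow> complex) \<Rightarrow> ('i \<Rightarrow> complex) \<Rightarrow> complex" where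
  "qf I A v = (\<Sum>i\<in>I. \<Sum>j\<in>I. cnj (v i) * A i j * v j)"

lemma psd_qf: "psd I A = (\<forall>v. qf I A v \<in> \<real> \<and> Re (qf I A v) \<ge> 0)"
  unfolding psd_def qf_def by simp

lemma psd_diag:
  assumes "psd I A" "finite I" "j \<in> I"
  shows "A j j \<in> \<real> \<and> Re (A j j) \<ge> 0"
proof -
  define v where "v = (\<lambda>i. if i = j then (1::complex) else 0)"
  have "qf I A v = (\<Sum>i\<in>I. if i = j then A j j else 0)"
    unfolding qf_def v_def using assms(2) by (intro sum.cong refl) (auto simp: mult.commute[of "A _ _"] if_distrib cong: if_cong)
  also have "\<dots> = A j j" using assms by simp
  finally show ?thesis using assms(1) unfolding psd_qf by metis
qed

lemma psd_trace0:
  assumes "psd I A" "finite I" "(\<Sum>j\<in>I. A j j) = 0" "j \<in> I"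
  shows "A j j = 0"
proof -
  have nn: "\<forall>i\<in>I. Re (A i i) \<ge> 0" using psd_diag[OF assms(1,2)] by blast
  have "Re (\<Sum>i\<in>I. A i i) = 0" using assms(3) by simp
  then have "(\<Sum>i\<in>I. Re (A i i)) = 0" by (simp add: Re_sum)
  then have "\<forall>i\<in>I. Re (A i i) = 0" using sum_nonneg_eq_0_iff[of I "\<lambda>i. Re (A i i)"] assms(2) nn by simp
  then have "Re (A j j) = 0" using assms(4) by simp
  moreover have "A j j \<in> \<real>" using psd_diag[OF assms(1,2,4)] by blast
  ultimately show ?thesis by (simp add: complex_eq_iff complex_is_Real_iff)
qed

lemma psd_trace_real:
  assumes "psd I A" "finite I"
  shows "(\<Sum>j\<in>I. A j j) = of_real (Re (\<Sum>j\<in>I. A j j)) \<and> Re (\<Sum>j\<in>I. A j j) \<ge> 0"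
proof -
  have "\<forall>j\<in>I. A j j = of_real (Re (A j j))" using psd_diag[OF assms] by (simp add: complex_eq_iff complex_is_Real_iff)
  then have "(\<Sum>j\<in>I. A j j) = (\<Sum>j\<in>I. of_real (Re (A j j)))" by (intro sum.cong refl) simp
  moreover have "Re (\<Sum>j\<in>I. A j j) \<ge> 0" using psd_diag[OF assms] by (simp add: Re_sum sum_nonneg)
  ultimately show ?thesis by (simp add: Re_sum)
qed

lemma psd_scale:
  fixes r :: real
  assumes "psd I A" "r > 0"
  shows "psd I (\<lambda>j k. A j k / of_real r)"
proof -
  have "qf I (\<lambda>j k. A j k / of_real r) v = qf I A v / of_real r" for v
    unfolding qf_def by (simp add: sum_divide_distrib)
  moreover have "x \<in> \<real> \<Longrightarrow> x / of_real r \<in> \<real>" for x :: complex by (auto simp: complex_is_Real_iff)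
  moreover have "Re (x / of_real r) = Re x / r" for x :: complex by simp
  ultimately show ?thesis using assms unfolding psd_qf by simp
qed

lemma cp_psd:
  assumes "completely_positive d n \<Phi>" "psd (Zdn d n) A"
  shows "psd (Zdn d n) (\<Phi> A)"
proof -
  define X where "X = (\<lambda>(a::nat, j::zvec) (b::nat, l::zvec). A j l)"
  have sum1: "(\<Sum>p\<in>{..<1} \<times> Zdn d n. f p) = (\<Sum>i\<in>Zdn d n. f (0, i))" for f :: "nat \<times> zvec \<Rightarrow> complex"
  proof -
    have "{..<(1::nat)} \<times> Zdn d n = Pair (0::nat) ` Zdn d n" by auto
    moreover have "inj_on (Pair (0::nat)) (Zdn d n)" by (auto simp: inj_on_def)
    ultimately show ?thesis by (simp add: sum.reindex)
  qed
  have qX: "qf ({..<1} \<times> Zdn d n) B v = qf (Zdn d n) (\<lambda>i j. B (0, i) (0, j)) (\<lambda>i. v (0, i))" for B :: "nat \<times> zvec \<Rightarrow> nat \<times> zvec \<Rightarrow> complex" and v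
    unfolding qf_def sum1 by (rule refl)
  have "psd ({..<1} \<times> Zdn d n) X"
    unfolding psd_qf qX X_def
    using assms(2) unfolding psd_qf by simp
  then have P: "psd ({..<1} \<times> Zdn d n) (ampl \<Phi> X)"
    using assms(1) unfolding completely_positive_def by blast
  have "ampl \<Phi> X (0, i) (0, j) = \<Phi> A i j" for i j
    unfolding ampl_def X_def by simp
  then have "qf (Zdn d n) (\<Phi> A) v = qf ({..<1} \<times> Zdn d n) (ampl \<Phi> X) (\<lambda>(a, i). v i)" for v
    unfolding qX by simp
  then show ?thesis
    using P unfolding psd_qf by simp
qed

lemma conj_psd:
  assumes "psd (Zdn d n) \<sigma>"
  shows "psd (Zdn d n) (conj_by d n G \<sigma>)"
proof -
  let ?Z = "Zdn d n"
  have key: "qf ?Z (conj_by d n G \<sigma>) v = qf ?Z \<sigma> (\<lambda>l. \<Sum>j\<in>?Z. cnj (G j l) * v j)" for v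
  proof -
    have "qf ?Z (conj_by d n G \<sigma>) v
        = (\<Sum>i\<in>?Z. \<Sum>j\<in>?Z. \<Sum>l\<in>?Z. \<Sum>l'\<in>?Z. cnj (v i) * G i l * \<sigma> l l' * cnj (G j l') * v j)"
      unfolding qf_def conj_by_def mmult_def adj_def
      by (simp add: sum_distrib_left sum_distrib_right mult_ac)
    also have "\<dots> = (\<Sum>i\<in>?Z. \<Sum>l\<in>?Z. \<Sum>j\<in>?Z. \<Sum>l'\<in>?Z. cnj (v i) * G i l * \<sigma> l l' * cnj (G j l') * v j)"
      by (rule sum.cong[OF refl], rule sum.swap)
    also have "\<dots> = (\<Sum>l\<in>?Z. \<Sum>i\<in>?Z. \<Sum>j\<in>?Z. \<Sum>l'\<in>?Z. cnj (v i) * G i l * \<sigma> l l' * cnj (G j l') * v j)"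
      by (rule sum.swap)
    also have "\<dots> = (\<Sum>l\<in>?Z. \<Sum>i\<in>?Z. \<Sum>l'\<in>?Z. \<Sum>j\<in>?Z. cnj (v i) * G i l * \<sigma> l l' * cnj (G j l') * v j)"
      by (rule sum.cong[OF refl], rule sum.cong[OF refl], rule sum.swap)
    also have "\<dots> = (\<Sum>l\<in>?Z. \<Sum>l'\<in>?Z. \<Sum>i\<in>?Z. \<Sum>j\<in>?Z. cnj (v i) * G i l * \<sigma> l l' * cnj (G j l') * v j)"
      by (rule sum.cong[OF refl], rule sum.swap)
    also have "\<dots> = qf ?Z \<sigma> (\<lambda>l. \<Sum>j\<in>?Z. cnj (G j l) * v j)"
      unfolding qf_def
      by (simp add: sum_distrib_left sum_distrib_right mult_ac cnj_sum)
    finally show ?thesis .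
  qed
  show ?thesis using assms unfolding psd_qf key by simp
qed

definition Tf :: "nat \<Rightarrow> nat \<Rightarrow> zvec \<Rightarrow> qop \<Rightarrow> complex" where
  "Tf d n t A = (\<Sum>y\<in>Zdn d n. cnj (chi d n t y) * A y y)"

definition Lf :: "nat \<Rightarrow> nat \<Rightarrow> zvec \<Rightarrow> zvec \<Rightarrow> qop \<Rightarrow> complex" where
  "Lf d n c a A = (\<Sum>y\<in>Zdn d n. cnj (chi d n c (addv d n y a)) * A y y)"

lemma Lf_T: "d > 0 \<Longrightarrow> Lf d n c a A = cnj (chi d n c a) * Tf d n c A"
  unfolding Lf_def Tf_def by (simp add: chi_addv sum_distrib_left mult_ac)

lemma qtr_adjZ: "qtr d n (mmult d n (adj (Zop d n t)) A) = Tf d n t A"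
proof -
  have "mmult d n (adj (Zop d n t)) A j j = cnj (chi d n t j) * A j j" if "j \<in> Zdn d n" for j
  proof -
    have "mmult d n (adj (Zop d n t)) A j j = (\<Sum>l\<in>Zdn d n. if l = j then cnj (chi d n t j) * A j j else 0)"
      unfolding mmult_def adj_def Zop_def using that by (intro sum.cong refl) auto
    then show ?thesis using that by simp
  qed
  then show ?thesis unfolding qtr_def Tf_def by (intro sum.cong refl) auto
qed

lemma Lf_local: "(\<forall>y\<in>Zdn d n. A y y = B y y) \<Longrightarrow> Lf d n c a A = Lf d n c a B"
  unfolding Lf_def by (intro sum.cong refl) auto

lemma Lf_sum: "Lf d n c a (\<lambda>j k. \<Sum>x\<in>S. f x j k) = (\<Sum>x\<in>S. Lf d n c a (f x))"
  unfolding Lf_def by (simp add: sum_distrib_left sum.swap[of _ S])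

lemma Lf_lin: "Lf d n c a (\<lambda>j k. \<Sum>x\<in>S. g x * f x j k) = (\<Sum>x\<in>S. g x * Lf d n c a (f x))"
  unfolding Lf_def by (simp add: sum_distrib_left sum.swap[of _ S] mult_ac)

lemma Lf_div: "Lf d n c a (\<lambda>j k. A j k / p) = Lf d n c a A / p"
  unfolding Lf_def by (simp add: sum_divide_distrib)

lemma term_step:
  fixes K R :: complex and w :: "zvec \<Rightarrow> complex"
  assumes d: "d > 0" and pt: "psd (Zdn d n) \<tau>"
    and IH: "\<And>\<sigma>'. psd (Zdn d n) \<sigma>' \<Longrightarrow> qtr d n \<sigma>' = 1 \<Longrightarrow> bench_exp d n M ws \<alpha> \<sigma>' = Lf d n c' \<alpha> \<sigma>' * R"
  shows "(if qtr d n \<tau> = 0 then 0 else K * K * qtr d n \<tau> * w k * bench_exp d n M ws \<alpha> (\<lambda>j k. \<tau> j k / qtr d n \<tau>))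
       = K * K * w k * Lf d n c' \<alpha> \<tau> * R"
proof -
  let ?p = "qtr d n \<tau>"
  have preal: "?p = of_real (Re ?p)" "Re ?p \<ge> 0"
    using psd_trace_real[OF pt finite_Zdn] unfolding qtr_def by auto
  show ?thesis
  proof (cases "?p = 0")
    case True
    then have "\<forall>y\<in>Zdn d n. \<tau> y y = 0" using psd_trace0[OF pt finite_Zdn] unfolding qtr_def by blast
    then have "Lf d n c' \<alpha> \<tau> = 0" unfolding Lf_def by simp
    then show ?thesis using True by simp
  next
    case False
    then have pos: "Re ?p > 0" using preal by (metis less_eq_real_def of_real_0)
    define \<sigma>' where "\<sigma>' = (\<lambda>j k. \<tau> j k / ?p)"
    have ps: "psd (Zdn d n) \<sigma>'" unfolding \<sigma>'_def using psd_scale[OF pt pos] preal(1) by simp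
    have tr: "qtr d n \<sigma>' = 1" unfolding \<sigma>'_def using False by (simp add: qtr_def sum_divide_distrib[symmetric])
    have "bench_exp d n M ws \<alpha> \<sigma>' = Lf d n c' \<alpha> \<tau> / ?p * R"
      using IH[OF ps tr] unfolding \<sigma>'_def by (simp add: Lf_div)
    then show ?thesis using False unfolding \<sigma>'_def by simp
  qed
qed

lemma beta_sum:
  assumes d: "d > 0" and so: "superop d n \<Phi>" and v: "v \<in> Zdn d n"
  shows "(\<Sum>\<beta>\<in>Zdn d n. Lf d n c a (\<Phi> (conj_by d n (mmult d n (Zop d n \<beta>) (Xop d n v)) \<sigma>)))
       = (\<Sum>s\<in>Zdn d n. (\<Sum>z\<in>Zdn d n. \<sigma> (subv d n z v) (subv d n z v) * cnj (chi d n s z)) * Lf d n c a (\<Phi> (Zop d n s)))"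
proof -
  let ?X = "\<lambda>\<beta>. conj_by d n (mmult d n (Zop d n \<beta>) (Xop d n v)) \<sigma>"
  let ?coef = "\<lambda>s. (\<Sum>z\<in>Zdn d n. \<sigma> (subv d n z v) (subv d n z v) * cnj (chi d n s z))"
  have "(\<Sum>\<beta>\<in>Zdn d n. Lf d n c a (\<Phi> (?X \<beta>))) = Lf d n c a (\<lambda>j k. \<Sum>\<beta>\<in>Zdn d n. \<Phi> (?X \<beta>) j k)"
    by (simp add: Lf_sum)
  also have "\<dots> = Lf d n c a (\<Phi> (\<lambda>j k. \<Sum>\<beta>\<in>Zdn d n. ?X \<beta> j k))"
    using superop_sum[OF so finite_Zdn, of ?X] by simp
  also have "\<dots> = Lf d n c a (\<Phi> (\<lambda>j k. \<Sum>s\<in>Zdn d n. ?coef s * Zop d n s j k))"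
  proof (rule Lf_local, intro ballI)
    fix y assume y: "y \<in> Zdn d n"
    have "\<forall>j\<in>Zdn d n. \<forall>k\<in>Zdn d n. (\<Sum>\<beta>\<in>Zdn d n. ?X \<beta> j k) = (\<Sum>s\<in>Zdn d n. ?coef s * Zop d n s j k)"
    proof (intro ballI)
      fix j k assume j: "j \<in> Zdn d n" and k: "k \<in> Zdn d n"
      show "(\<Sum>\<beta>\<in>Zdn d n. ?X \<beta> j k) = (\<Sum>s\<in>Zdn d n. ?coef s * Zop d n s j k)"
        using twirl[OF d j k v, of \<sigma>] diag_decomp[OF d j k, of "\<lambda>x. \<sigma> (subv d n x v) (subv d n x v)"]
        by simp
    qed
    then show "\<Phi> (\<lambda>j k. \<Sum>\<beta>\<in>Zdn d n. ?X \<beta> j k) y y = \<Phi> (\<lambda>j k. \<Sum>s\<in>Zdn d n. ?coef s * Zop d n s j k) y y"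
      by (rule superop_local[OF so _ y y])
  qed
  also have "\<dots> = Lf d n c a (\<lambda>j k. \<Sum>s\<in>Zdn d n. ?coef s * \<Phi> (Zop d n s) j k)"
    using superop_lin[OF so finite_Zdn, of ?coef "Zop d n"] by simp
  also have "\<dots> = (\<Sum>s\<in>Zdn d n. ?coef s * Lf d n c a (\<Phi> (Zop d n s)))"
    by (rule Lf_lin)
  finally show ?thesis .
qed

lemma coef_eq:
  assumes d: "d > 0" and v: "v \<in> Zdn d n"
  shows "(\<Sum>z\<in>Zdn d n. \<sigma> (subv d n z v) (subv d n z v) * cnj (chi d n s z))
       = cnj (chi d n s v) * Tf d n s \<sigma>"
proof -
  have "(\<Sum>z\<in>Zdn d n. \<sigma> (subv d n z v) (subv d n z v) * cnj (chi d n s z))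
      = (\<Sum>y\<in>Zdn d n. \<sigma> (subv d n (addv d n y v) v) (subv d n (addv d n y v) v) * cnj (chi d n s (addv d n y v)))"
    using sum.reindex_bij_betw[OF shift_bij[OF d v], of "\<lambda>z. \<sigma> (subv d n z v) (subv d n z v) * cnj (chi d n s z)"]
    by simp
  also have "\<dots> = (\<Sum>y\<in>Zdn d n. cnj (chi d n s v) * (cnj (chi d n s y) * \<sigma> y y))"
    by (intro sum.cong refl) (simp add: subv_addv[OF d _ v] chi_addv[OF d] mult_ac)
  also have "\<dots> = cnj (chi d n s v) * Tf d n s \<sigma>" unfolding Tf_def by (simp add: sum_distrib_left)
  finally show ?thesis .
qed

lemma round_step:
  fixes R :: complex
  assumes d: "d > 0" and inst: "instrument d n M" and sig: "psd (Zdn d n) \<sigma>"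
    and a: "a \<in> Zdn d n" and c: "c \<in> Zdn d n" and c': "c' \<in> Zdn d n"
    and IH: "\<forall>\<alpha>\<in>Zdn d n. \<forall>\<sigma>'. psd (Zdn d n) \<sigma>' \<longrightarrow> qtr d n \<sigma>' = 1 \<longrightarrow>
               bench_exp d n M ws \<alpha> \<sigma>' = Lf d n c' \<alpha> \<sigma>' * R"
  shows "bench_exp d n M ((\<lambda>k. cnj (chi d n k (subv d n c c'))) # ws) a \<sigma>
       = Lf d n c a \<sigma> * gpf d n M c c' * R"
proof -
  let ?Z = "Zdn d n"
  define K :: complex where "K = 1 / of_nat (d ^ n)"
  define W where "W = (\<lambda>k. cnj (chi d n k (subv d n c c')))"
  define \<tau> where "\<tau> = (\<lambda>\<alpha> \<beta> u. M u (conj_by d n (mmult d n (Zop d n \<beta>) (Xop d n (subv d n a \<alpha>))) \<sigma>))"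
  have cp: "completely_positive d n (M u)" if "u \<in> ?Z" for u using inst that unfolding instrument_def by blast
  have so: "superop d n (M u)" if "u \<in> ?Z" for u using cp[OF that] unfolding completely_positive_def by blast
  have s1: "bench_exp d n M (W # ws) a \<sigma>
     = (\<Sum>\<alpha>\<in>?Z. \<Sum>\<beta>\<in>?Z. \<Sum>u\<in>?Z. K * K * W (addv d n \<alpha> u) * Lf d n c' \<alpha> (\<tau> \<alpha> \<beta> u) * R)"
    unfolding bench_exp.simps Let_def \<tau>_def
  proof (intro sum.cong refl)
    fix \<alpha> \<beta> u assume al: "\<alpha> \<in> ?Z" and u: "u \<in> ?Z"
    let ?t = "M u (conj_by d n (mmult d n (Zop d n \<beta>) (Xop d n (subv d n a \<alpha>))) \<sigma>)"
    have pt: "psd ?Z ?t" by (rule cp_psd[OF cp[OF u] conj_psd[OF sig]])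
    show "(if qtr d n ?t = 0 then 0 else 1 / of_nat (d ^ n) * (1 / of_nat (d ^ n)) * qtr d n ?t * W (addv d n \<alpha> u) *
              bench_exp d n M ws \<alpha> (\<lambda>j k. ?t j k / qtr d n ?t))
          = K * K * W (addv d n \<alpha> u) * Lf d n c' \<alpha> ?t * R"
      unfolding K_def
      by (rule term_step[OF d pt]) (use IH al in blast)
  qed
  define F where "F = (\<lambda>u s. K * K * R * cnj (chi d n u (subv d n c c')) * cnj (chi d n s a) * Tf d n s \<sigma> * Tf d n c' (M u (Zop d n s)))"
  have s2: "(\<Sum>\<beta>\<in>?Z. \<Sum>u\<in>?Z. K * K * W (addv d n \<alpha> u) * Lf d n c' \<alpha> (\<tau> \<alpha> \<beta> u) * R)
      = (\<Sum>s\<in>?Z. \<Sum>u\<in>?Z. F u s * (chi d n \<alpha> s * cnj (chi d n \<alpha> c)))" if al: "\<alpha> \<in> ?Z" for \<alpha>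
  proof -
    have v: "subv d n a \<alpha> \<in> ?Z" using d by simp
    have "(\<Sum>\<beta>\<in>?Z. \<Sum>u\<in>?Z. K * K * W (addv d n \<alpha> u) * Lf d n c' \<alpha> (\<tau> \<alpha> \<beta> u) * R)
        = (\<Sum>u\<in>?Z. K * K * W (addv d n \<alpha> u) * R * (\<Sum>\<beta>\<in>?Z. Lf d n c' \<alpha> (\<tau> \<alpha> \<beta> u)))"
      by (subst sum.swap) (simp add: sum_distrib_left mult_ac)
    also have "\<dots> = (\<Sum>u\<in>?Z. K * K * W (addv d n \<alpha> u) * R *
          (\<Sum>s\<in>?Z. (cnj (chi d n s (subv d n a \<alpha>)) * Tf d n s \<sigma>) * Lf d n c' \<alpha> (M u (Zop d n s))))"
    proof (rule sum.cong[OF refl])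
      fix u assume u: "u \<in> ?Z"
      show "K * K * W (addv d n \<alpha> u) * R * (\<Sum>\<beta>\<in>?Z. Lf d n c' \<alpha> (\<tau> \<alpha> \<beta> u)) =
          K * K * W (addv d n \<alpha> u) * R *
          (\<Sum>s\<in>?Z. (cnj (chi d n s (subv d n a \<alpha>)) * Tf d n s \<sigma>) * Lf d n c' \<alpha> (M u (Zop d n s)))"
        unfolding \<tau>_def beta_sum[OF d so[OF u] v] coef_eq[OF d v] by (rule refl)
    qed
    also have "\<dots> = (\<Sum>u\<in>?Z. \<Sum>s\<in>?Z. F u s * (chi d n \<alpha> s * cnj (chi d n \<alpha> c)))"
    proof (rule sum.cong[OF refl])
      fix u assume u: "u \<in> ?Z"
      have e1: "W (addv d n \<alpha> u) = cnj (chi d n \<alpha> c) * chi d n \<alpha> c' * cnj (chi d n u (subv d n c c'))"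
      proof -
        have "chi d n (addv d n \<alpha> u) (subv d n c c') = chi d n (subv d n c c') (addv d n \<alpha> u)"
          by (rule chi_sym)
        also have "\<dots> = chi d n (subv d n c c') \<alpha> * chi d n (subv d n c c') u" by (rule chi_addv[OF d])
        also have "\<dots> = chi d n \<alpha> (subv d n c c') * chi d n u (subv d n c c')"
          using chi_sym[of d n "subv d n c c'" \<alpha>] chi_sym[of d n "subv d n c c'" u] by simp
        also have "\<dots> = chi d n \<alpha> c * cnj (chi d n \<alpha> c') * chi d n u (subv d n c c')"
          by (simp add: chi_subv[OF d])
        finally show ?thesis unfolding W_def by simp
      qed
      have e2: "cnj (chi d n s (subv d n a \<alpha>)) = cnj (chi d n s a) * chi d n \<alpha> s" for s
        using chi_subv[OF d, of n s a \<alpha>] chi_sym[of d n s \<alpha>] by simp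
      have e3: "Lf d n c' \<alpha> X = cnj (chi d n \<alpha> c') * Tf d n c' X" for X
        using Lf_T[OF d, of n c' \<alpha> X] chi_sym[of d n c' \<alpha>] by simp
      have one: "chi d n \<alpha> c' * cnj (chi d n \<alpha> c') = 1" by simp
      have "K * K * W (addv d n \<alpha> u) * R * ((cnj (chi d n s (subv d n a \<alpha>)) * Tf d n s \<sigma>) * Lf d n c' \<alpha> (M u (Zop d n s)))
          = (chi d n \<alpha> c' * cnj (chi d n \<alpha> c')) * (F u s * (chi d n \<alpha> s * cnj (chi d n \<alpha> c)))" for s
        unfolding e1 e2 e3 F_def by (simp add: mult_ac)
      then show "K * K * W (addv d n \<alpha> u) * R *
          (\<Sum>s\<in>?Z. (cnj (chi d n s (subv d n a \<alpha>)) * Tf d n s \<sigma>) * Lf d n c' \<alpha> (M u (Zop d n s)))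
          = (\<Sum>s\<in>?Z. F u s * (chi d n \<alpha> s * cnj (chi d n \<alpha> c)))"
        unfolding one by (simp add: sum_distrib_left)
    qed
    also have "\<dots> = (\<Sum>s\<in>?Z. \<Sum>u\<in>?Z. F u s * (chi d n \<alpha> s * cnj (chi d n \<alpha> c)))"
      by (rule sum.swap)
    finally show ?thesis .
  qed
  have "bench_exp d n M (W # ws) a \<sigma> = (\<Sum>\<alpha>\<in>?Z. \<Sum>s\<in>?Z. \<Sum>u\<in>?Z. F u s * (chi d n \<alpha> s * cnj (chi d n \<alpha> c)))"
    unfolding s1 by (rule sum.cong[OF refl]) (rule s2)
  also have "\<dots> = (\<Sum>s\<in>?Z. \<Sum>\<alpha>\<in>?Z. \<Sum>u\<in>?Z. F u s * (chi d n \<alpha> s * cnj (chi d n \<alpha> c)))"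
    by (rule sum.swap)
  also have "\<dots> = (\<Sum>s\<in>?Z. \<Sum>u\<in>?Z. \<Sum>\<alpha>\<in>?Z. F u s * (chi d n \<alpha> s * cnj (chi d n \<alpha> c)))"
    by (rule sum.cong[OF refl], rule sum.swap)
  also have "\<dots> = (\<Sum>s\<in>?Z. \<Sum>u\<in>?Z. F u s * (\<Sum>\<alpha>\<in>?Z. chi d n \<alpha> s * cnj (chi d n \<alpha> c)))"
    by (simp only: sum_distrib_left)
  also have "\<dots> = (\<Sum>s\<in>?Z. if s = c then (\<Sum>u\<in>?Z. F u c) * of_nat (d ^ n) else 0)"
    by (intro sum.cong refl) (simp add: ortho[OF d _ c] sum_distrib_right)
  also have "\<dots> = (\<Sum>u\<in>?Z. F u c) * of_nat (d ^ n)" using c by simp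
  also have "\<dots> = Lf d n c a \<sigma> * gpf d n M c c' * R"
  proof -
    have Kd: "K * K * of_nat (d ^ n) = K" unfolding K_def using d by simp
    have "(\<Sum>u\<in>?Z. F u c) * of_nat (d ^ n)
        = (K * K * of_nat (d ^ n)) * (cnj (chi d n c a) * Tf d n c \<sigma>) * (\<Sum>u\<in>?Z. cnj (chi d n u (subv d n c c')) * Tf d n c' (M u (Zop d n c))) * R"
      unfolding F_def by (simp add: sum_distrib_left sum_distrib_right mult_ac)
    also have "\<dots> = Lf d n c a \<sigma> * gpf d n M c c' * R"
      unfolding Lf_T[OF d] gpf_def qtr_adjZ K_def using d by (simp add: field_simps)
    finally show ?thesis .
  qed
  finally show ?thesis unfolding W_def .
qed

lemma chi_zero_left[simp]: "chi d n zero_v x = 1" unfolding chi_def zero_v_def by simp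

lemma qtr_Zneg: assumes d: "d > 0"
  shows "qtr d n (mmult d n (Zop d n (negv d n c)) \<rho>) = Tf d n c \<rho>"
proof -
  have "mmult d n (Zop d n (negv d n c)) \<rho> j j = cnj (chi d n c j) * \<rho> j j" if "j \<in> Zdn d n" for j
  proof -
    have "mmult d n (Zop d n (negv d n c)) \<rho> j j = (\<Sum>l\<in>Zdn d n. if l = j then chi d n (negv d n c) j * \<rho> j j else 0)"
      unfolding mmult_def Zop_def using that by (intro sum.cong refl) auto
    also have "\<dots> = chi d n (negv d n c) j * \<rho> j j" using that by simp
    also have "chi d n (negv d n c) j = cnj (chi d n c j)"
      using chi_sym[of d n "negv d n c" j] chi_negv[OF d, of n j c] chi_sym[of d n j c] by simp
    finally show ?thesis .
  qed
  then show ?thesis unfolding qtr_def Tf_def by (intro sum.cong refl) auto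
qed

theorem theorem4:
  fixes d n m :: nat and M :: "zvec \<Rightarrow> qop \<Rightarrow> qop" and \<rho> :: qop and c :: "nat \<Rightarrow> zvec"
  assumes "d > 0" and "n > 0" and "m > 0"
    and "instrument d n M"
    and "density d n \<rho>"
    and "\<forall>j\<in>{1..m}. c j \<in> Zdn d n"
    and "c (Suc m) = zero_v"
  shows "bench_exp d n M
           (map (\<lambda>j. \<lambda>k. cnj (chi d n k (subv d n (c j) (c (Suc j))))) [1..<Suc m])
           zero_v \<rho>
         = qtr d n (mmult d n (Zop d n (negv d n (c 1))) \<rho>) *
           (\<Prod>j = 1..m. gpf d n M (c j) (c (Suc j)))"
proof -
  note d = assms(1)
  let ?Z = "Zdn d n"
  let ?W = "\<lambda>j. \<lambda>k. cnj (chi d n k (subv d n (c j) (c (Suc j))))"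
  let ?Q = "\<lambda>j. \<forall>a\<in>?Z. \<forall>\<sigma>. psd ?Z \<sigma> \<longrightarrow> qtr d n \<sigma> = 1 \<longrightarrow>
      bench_exp d n M (map ?W [j..<Suc m]) a \<sigma> = Lf d n (c j) a \<sigma> * (\<Prod>i = j..m. gpf d n M (c i) (c (Suc i)))"
  have cZ: "c j \<in> ?Z" if "1 \<le> j" "j \<le> Suc m" for j
  proof (cases "j = Suc m")
    case True then show ?thesis using assms(7) d by simp
  next
    case False then show ?thesis using assms(6) that by auto
  qed
  have Q1: "?Q 1"
  proof (rule inc_induct[of 1 "Suc m" ?Q])
    show "1 \<le> Suc m" by simp
    show "?Q (Suc m)"
    proof (intro ballI allI impI)
      fix a \<sigma> assume "a \<in> ?Z" "psd ?Z \<sigma>" "qtr d n \<sigma> = 1"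
      have "Lf d n (c (Suc m)) a \<sigma> = qtr d n \<sigma>" unfolding assms(7) Lf_def qtr_def by simp
      then show "bench_exp d n M (map ?W [Suc m..<Suc m]) a \<sigma> = Lf d n (c (Suc m)) a \<sigma> * (\<Prod>i = Suc m..m. gpf d n M (c i) (c (Suc i)))"
        using \<open>qtr d n \<sigma> = 1\<close> by simp
    qed
  next
    fix k assume k1: "1 \<le> k" and km: "k < Suc m" and IH: "?Q (Suc k)"
    show "?Q k"
    proof (intro ballI allI impI)
      fix a \<sigma> assume a: "a \<in> ?Z" and sig: "psd ?Z \<sigma>" and tr: "qtr d n \<sigma> = 1"
      have lst: "map ?W [k..<Suc m] = ?W k # map ?W [Suc k..<Suc m]" by (simp only: upt_conv_Cons[OF km] list.map)
      have "bench_exp d n M (map ?W [k..<Suc m]) a \<sigma>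
          = Lf d n (c k) a \<sigma> * gpf d n M (c k) (c (Suc k)) * (\<Prod>i = Suc k..m. gpf d n M (c i) (c (Suc i)))"
        unfolding lst
        by (rule round_step[OF d assms(4) sig a cZ[OF k1] cZ]) (use km IH in auto)
      also have "\<dots> = Lf d n (c k) a \<sigma> * (\<Prod>i = k..m. gpf d n M (c i) (c (Suc i)))"
        using km by (simp add: prod.atLeast_Suc_atMost mult.assoc)
      finally show "bench_exp d n M (map ?W [k..<Suc m]) a \<sigma> = Lf d n (c k) a \<sigma> * (\<Prod>i = k..m. gpf d n M (c i) (c (Suc i)))" .
    qed
  qed
  have rho: "psd ?Z \<rho>" "qtr d n \<rho> = 1" using assms(5) unfolding density_def by auto
  have "Lf d n (c 1) zero_v \<rho> = qtr d n (mmult d n (Zop d n (negv d n (c 1))) \<rho>)"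
    unfolding Lf_T[OF d] qtr_Zneg[OF d] by simp
  then show ?thesis using Q1 rho d by simp
qed

end
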